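(* For every integer $n\ge 3$, the complete graph $K_n$ satisfies $\mathrm{ppn}(K_n)=\lceil \log_2(n)\rceil - 1$.
   Context: A $k$-prime product distance labeling of a finite graph $G$ (for a positive integer $k$) is an injective map $L:V(G)\to\mathbb{Z}$ such that $|L(u)-L(v)|>1$ for all distinct vertices $u,v$ of $G$, and such that for every pair of adjacent vertices $u,v$ the integer $|L(u)-L(v)|$ has at most $k$ prime factors counted with multiplicity. $G$ is a $k$-prime product graph if it has such a labeling. The prime product number $\mathrm{ppn}(G)$ is the integer $k$ such that $G$ is a $k$-prime product graph but not a $(k-1)$-prime product graph (equivalently, the least such $k$). *)

theory Defs
  imports Complex_Main "HOL-Computational_Algebra.Primes"
begin

definition Omega :: "nat \<Rightarrow> nat" where
  "Omega m = size (prime_factorization m)"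

(* A finite simple graph is given by a vertex set V and a symmetric,
   irreflexive adjacency relation E. *)
definition k_ppd_labeling :: "'a set \<Rightarrow> ('a \<Rightarrow> 'a \<Rightarrow> bool) \<Rightarrow> nat \<Rightarrow> ('a \<Rightarrow> int) \<Rightarrow> bool" where
  "k_ppd_labeling V E k L \<longleftrightarrow>
     inj_on L V \<and>
     (\<forall>u\<in>V. \<forall>v\<in>V. u \<noteq> v \<longrightarrow> \<bar>L u - L v\<bar> > 1) \<and>
     (\<forall>u\<in>V. \<forall>v\<in>V. E u v \<longrightarrow> Omega (nat \<bar>L u - L v\<bar>) \<le> k)"

definition k_prime_product_graph :: "'a set \<Rightarrow> ('a \<Rightarrow> 'a \<Rightarrow> bool) \<Rightarrow> nat \<Rightarrow> bool" where
  "k_prime_product_graph V E k \<longleftrightarrow> (\<exists>L. k_ppd_labeling V E k L)"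

definition ppn :: "'a set \<Rightarrow> ('a \<Rightarrow> 'a \<Rightarrow> bool) \<Rightarrow> nat" where
  "ppn V E = (LEAST k. k \<ge> 1 \<and> k_prime_product_graph V E k)"

definition K_vertices :: "nat \<Rightarrow> nat set" where "K_vertices n = {0..<n}"
definition K_edges :: "nat \<Rightarrow> nat \<Rightarrow> bool" where "K_edges u v \<longleftrightarrow> u \<noteq> v"

end

theory Submission
  imports Defs
begin

lemma pow_le_prod_mset:
  fixes M :: "nat multiset"
  shows "(\<forall>x\<in>#M. b \<le> x) \<Longrightarrow> b ^ size M \<le> prod_mset M"
proof (induction M)
  case empty then show ?case by simp
next
  case (add x M)
  then have "b ^ size M \<le> prod_mset M" "b \<le> x" by auto
  then show ?case by (simp add: mult_le_mono)
qed

lemma Omega_pow2_le: "m > 0 \<Longrightarrow> 2 ^ Omega m \<le> m"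
proof -
  assume m: "m > 0"
  have "\<forall>x\<in>#prime_factorization m. 2 \<le> x"
    by (auto dest: in_prime_factors_imp_prime simp: prime_ge_2_nat)
  then have "2 ^ size (prime_factorization m) \<le> prod_mset (prime_factorization m)"
    by (rule pow_le_prod_mset)
  then show ?thesis using m by (simp add: Omega_def)
qed

lemma Omega_pow3_le: "m > 0 \<Longrightarrow> odd m \<Longrightarrow> 3 ^ Omega m \<le> m"
proof -
  assume m: "m > 0" "odd m"
  have "\<forall>x\<in>#prime_factorization m. 3 \<le> x"
  proof
    fix x assume x: "x \<in># prime_factorization m"
    then have p: "prime x" and d: "x dvd m" by auto
    have "x \<noteq> 2" using d m(2) by auto
    with p show "3 \<le> x" using prime_ge_2_nat[OF p] by linarith
  qed
  then have "3 ^ size (prime_factorization m) \<le> prod_mset (prime_factorization m)"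
    by (rule pow_le_prod_mset)
  then show ?thesis using m by (simp add: Omega_def)
qed

lemma Omega_ge: "m > 0 \<Longrightarrow> 2 ^ j dvd m \<Longrightarrow> j \<le> Omega m"
proof -
  assume m: "m > 0" and d: "2 ^ j dvd m"
  then obtain r where r: "m = 2 ^ j * r" by blast
  with m have "r \<noteq> 0" by auto
  then have "prime_factorization m = replicate_mset j 2 + prime_factorization r"
    using r by (simp add: prime_factorization_mult prime_factorization_prime_power)
  then show ?thesis by (simp add: Omega_def)
qed

lemma Omega_double: "r > 0 \<Longrightarrow> Omega (2 * r) = Suc (Omega r)"
  by (simp add: Omega_def prime_factorization_mult prime_factorization_prime)

lemma exists_j: "(n::nat) \<ge> 2 \<Longrightarrow> \<exists>j. 2 ^ j < n \<and> n \<le> 2 ^ Suc j"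
proof (induction n rule: nat_induct_at_least)
  case base then show ?case by (rule exI[of _ 0]) simp
next
  case (Suc n)
  then obtain j where j: "2 ^ j < n" "n \<le> 2 ^ Suc j" by blast
  show ?case
  proof (cases "Suc n \<le> 2 ^ Suc j")
    case True then show ?thesis using j by (intro exI[of _ j]) simp
  next
    case False
    then have "n = 2 ^ Suc j" using j by simp
    then show ?thesis by (intro exI[of _ "Suc j"]) simp
  qed
qed

lemma pow_ineq: "j \<ge> 1 \<Longrightarrow> (2::nat) ^ (j + 2) \<le> 3 ^ (j + 1)"
proof (induction j rule: nat_induct_at_least)
  case base then show ?case by simp
next
  case (Suc j)
  then show ?case by simp
qed


lemma label_props:
  fixes j n u v :: nat and f :: "nat \<Rightarrow> nat"
  assumes j1: "j \<ge> 1" and nj: "n \<le> 2 ^ Suc j"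
    and f: "\<And>x. f x = 2 * x + (if 2 ^ j \<le> x then 1 else 0)"
    and uv: "u < v" "v < n"
  shows "f u + 2 \<le> f v \<and> Omega (f v - f u) \<le> j"
proof (cases "v < 2 ^ j")
  case True
  then have "\<not> 2 ^ j \<le> u" using uv by simp
  with True have e: "f v - f u = 2 * (v - u)" using f by simp
  have "2 ^ Omega (v - u) \<le> v - u" using uv by (intro Omega_pow2_le) simp
  also have "\<dots> < 2 ^ j" using True by simp
  finally have "Omega (v - u) < j" using power_strict_increasing_iff[of "2::nat"] by simp
  then show ?thesis using e uv f True \<open>\<not> 2 ^ j \<le> u\<close> by (simp add: Omega_double)
next
  case False
  note vF = False
  show ?thesis
  proof (cases "2 ^ j \<le> u")
    case True
    with False have e: "f v - f u = 2 * (v - u)" using f by simp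
    have "2 ^ Omega (v - u) \<le> v - u" using uv by (intro Omega_pow2_le) simp
    also have "\<dots> < 2 ^ j" using True uv nj by simp
    finally have "Omega (v - u) < j" using power_strict_increasing_iff[of "2::nat"] by simp
    then show ?thesis using e uv f True False by (simp add: Omega_double)
  next
    case False
    then have e: "f v - f u = 2 * (v - u) + 1" using f vF uv by simp
    have "3 ^ Omega (f v - f u) \<le> f v - f u" using e by (intro Omega_pow3_le) simp_all
    also have "\<dots> < 2 ^ (j + 2)" using e uv nj by simp
    also have "\<dots> \<le> 3 ^ (j + 1)" using pow_ineq[OF j1] .
    finally have "(3::nat) ^ Omega (f v - f u) < 3 ^ (j + 1)" .
    then have "Omega (f v - f u) < j + 1" by (rule power_less_imp_less_exp[rotated]) simp
    then show ?thesis using e uv f False vF by simp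
  qed
qed

lemma lower_bound:
  fixes n j k :: nat and L :: "nat \<Rightarrow> int"
  assumes "2 ^ j < n" and lab: "k_ppd_labeling (K_vertices n) K_edges k L"
  shows "j \<le> k"
proof -
  let ?g = "\<lambda>x. L x mod 2 ^ j"
  have sub: "?g ` {0..<n} \<subseteq> {0..<2 ^ j}" by auto
  have "\<not> inj_on ?g {0..<n}"
  proof
    assume "inj_on ?g {0..<n}"
    then have "card (?g ` {0..<n}) = n" by (simp add: card_image)
    moreover have "card (?g ` {0..<n}) \<le> card {0..<(2::int) ^ j}"
      by (rule card_mono[OF _ sub]) simp
    ultimately show False using assms(1) by (simp add: nat_power_eq)
  qed
  then obtain u v where uv: "u \<in> {0..<n}" "v \<in> {0..<n}" "u \<noteq> v" "?g u = ?g v"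
    unfolding inj_on_def by blast
  have gt: "\<bar>L u - L v\<bar> > 1" and om: "Omega (nat \<bar>L u - L v\<bar>) \<le> k"
    using lab uv unfolding k_ppd_labeling_def K_vertices_def K_edges_def by auto
  have "(2::int) ^ j dvd (L u - L v)" using uv(4) by (simp add: mod_eq_dvd_iff)
  then have "(2::int) ^ j dvd \<bar>L u - L v\<bar>" by simp
  then have "int (2 ^ j) dvd int (nat \<bar>L u - L v\<bar>)" by simp
  then have "2 ^ j dvd nat \<bar>L u - L v\<bar>" by (simp only: of_nat_dvd_iff)
  then have "j \<le> Omega (nat \<bar>L u - L v\<bar>)" using gt by (intro Omega_ge) simp_all
  with om show ?thesis by simp
qed

theorem mainTheorem3:
  fixes n :: nat
  assumes "n \<ge> 3"
  shows "int (ppn (K_vertices n) K_edges) = \<lceil>log 2 (real n)\<rceil> - 1"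
proof -
  obtain j where j: "2 ^ j < n" "n \<le> 2 ^ Suc j" using exists_j[of n] assms by auto
  have j1: "j \<ge> 1"
  proof (rule ccontr)
    assume "\<not> j \<ge> 1" then have "j = 0" by simp
    with j assms show False by simp
  qed
  define f :: "nat \<Rightarrow> nat" where "f x = 2 * x + (if 2 ^ j \<le> x then 1 else 0)" for x
  have P: "f u + 2 \<le> f v \<and> Omega (f v - f u) \<le> j" if "u < v" "v < n" for u v
    using label_props[OF j1 j(2) _ that] f_def by simp
  define L where "L x = int (f x)" for x
  have lab: "k_ppd_labeling (K_vertices n) K_edges j L"
    unfolding k_ppd_labeling_def
  proof (intro conjI ballI impI)
    show "inj_on L (K_vertices n)"
    proof (rule inj_onI)
      fix u v assume "u \<in> K_vertices n" "v \<in> K_vertices n" "L u = L v"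
      then show "u = v" using P[of u v] P[of v u] unfolding L_def K_vertices_def
        by (cases u v rule: linorder_cases) auto
    qed
  next
    fix u v assume "u \<in> K_vertices n" "v \<in> K_vertices n" "u \<noteq> v"
    then show "1 < \<bar>L u - L v\<bar>" using P[of u v] P[of v u] unfolding L_def K_vertices_def
      by (cases u v rule: linorder_cases) auto
  next
    fix u v assume uv: "u \<in> K_vertices n" "v \<in> K_vertices n" "K_edges u v"
    show "Omega (nat \<bar>L u - L v\<bar>) \<le> j"
    proof (cases u v rule: linorder_cases)
      case less
      then have "nat \<bar>L u - L v\<bar> = f v - f u" using P[of u v] uv unfolding L_def K_vertices_def
        by auto
      then show ?thesis using P[of u v] less uv unfolding K_vertices_def by simp
    next
      case equal then show ?thesis using uv unfolding K_edges_def by simp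
    next
      case greater
      then have "nat \<bar>L u - L v\<bar> = f u - f v" using P[of v u] uv unfolding L_def K_vertices_def
        by auto
      then show ?thesis using P[of v u] greater uv unfolding K_vertices_def by simp
    qed
  qed
  have "ppn (K_vertices n) K_edges = j"
    unfolding ppn_def
  proof (rule Least_equality)
    show "1 \<le> j \<and> k_prime_product_graph (K_vertices n) K_edges j"
      using j1 lab unfolding k_prime_product_graph_def by blast
  next
    fix y assume "1 \<le> y \<and> k_prime_product_graph (K_vertices n) K_edges y"
    then obtain L' where "k_ppd_labeling (K_vertices n) K_edges y L'"
      unfolding k_prime_product_graph_def by blast
    then show "j \<le> y" using lower_bound[OF j(1)] by blast
  qed
  moreover have "\<lceil>log 2 (real n)\<rceil> = int j + 1"
  proof (rule ceiling_unique)
    have "(2::real) powr (real j) < real n"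
      using j(1) by (simp add: powr_realpow)
    then have "real j < log 2 (real n)" using assms by (subst less_log_iff) auto
    then show "real_of_int (int j + 1) - 1 < log 2 (real n)" by simp
    have "real n \<le> (2::real) powr (real j + 1)"
    proof -
      have e: "(2::real) powr (real j + 1) = 2 ^ Suc j" by (simp add: powr_add powr_realpow)
      have "real n \<le> real (2 ^ Suc j)" using j(2) by (simp only: of_nat_le_iff)
      then show ?thesis unfolding e by simp
    qed
    then have "log 2 (real n) \<le> real j + 1" using assms by (subst log_le_iff) auto
    then show "log 2 (real n) \<le> real_of_int (int j + 1)" by simp
  qed
  ultimately show ?thesis by simp
qed

end
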